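(* Let $n \geq 2$ and let $s=(s_1,s_2,\ldots,s_n)$ be a sequence of numbers from $\{0,1,2\}$. Then the cardinality of the set \[ \{(x_1,\ldots,x_n)\in \{0,1\}^n \mid x_1+x_2\neq s_1,\ x_2+x_3\neq s_2,\ \ldots,\ x_{n-1}+x_n\neq s_{n-1},\ \textrm{and } x_n+x_1\neq s_n\} \] is at most $\ell(n)$.
   Context: The Fibonacci numbers are defined for all integers by $\varphi(0)=0$, $\varphi(1)=1$ and $\varphi(n)=\varphi(n-1)+\varphi(n-2)$. The Lucas numbers are defined by $\ell(n)=\varphi(n-1)+\varphi(n+1)$ (so $\ell(1)=1,\ell(2)=3,\ell(3)=4,\ell(4)=7,\dots$). *)

theory Defs
  imports Main
begin

fun fibo :: "nat \<Rightarrow> nat" where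
  "fibo 0 = 0"
| "fibo (Suc 0) = 1"
| "fibo (Suc (Suc n)) = fibo (Suc n) + fibo n"

definition lucas :: "nat \<Rightarrow> nat" where
  "lucas n = fibo (n - 1) + fibo (n + 1)"

end

theory Submission
  imports Defs
begin

fun gen :: "nat list \<Rightarrow> nat \<Rightarrow> nat \<Rightarrow> nat list list" where
  "gen [] a b = (if a = b then [[]] else [])"
| "gen (c#cs) a b = map ((#) 0) (if a \<noteq> c then gen cs 0 b else [])
      @ map ((#) 1) (if a + 1 \<noteq> c then gen cs 1 b else [])"

lemma gen_mem:
  "length xs = length cs \<Longrightarrow> set xs \<subseteq> {0,1} \<Longrightarrow>
   (\<forall>i<length cs. (a#xs)!i + xs!i \<noteq> cs!i) \<Longrightarrow> last (a#xs) = b \<Longrightarrow>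
   xs \<in> set (gen cs a b)"
proof (induction cs arbitrary: a xs)
  case Nil
  then show ?case by simp
next
  case (Cons c cs)
  from Cons.prems(1) obtain x ys where xs: "xs = x # ys" by (cases xs) auto
  have x01: "x \<in> {0,1}" using Cons.prems(2) xs by auto
  have c0: "a + x \<noteq> c" using Cons.prems(3)[rule_format, of 0] xs by simp
  have rest: "\<forall>i<length cs. (x#ys)!i + ys!i \<noteq> cs!i"
  proof (intro allI impI)
    fix i assume "i < length cs"
    then show "(x#ys)!i + ys!i \<noteq> cs!i"
      using Cons.prems(3)[rule_format, of "Suc i"] xs by simp
  qed
  have "ys \<in> set (gen cs x b)"
    using Cons.IH[of ys x] Cons.prems xs rest by auto
  then show ?case using x01 c0 xs by auto
qed

lemma fibo_mono1: "fibo n \<le> fibo (Suc n)"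
  by (induction n rule: fibo.induct) auto

lemma fibo_mono: "m \<le> n \<Longrightarrow> fibo m \<le> fibo n"
  by (rule lift_Suc_mono_le[of fibo]) (auto simp: fibo_mono1)

lemma lucas_mono1: "lucas k \<le> lucas (Suc k)"
  unfolding lucas_def using fibo_mono[of "k - 1" k] fibo_mono1[of "Suc k"] by simp

definition inv :: "nat \<Rightarrow> nat \<Rightarrow> nat \<Rightarrow> nat \<Rightarrow> nat \<Rightarrow> bool" where
  "inv k a b c d \<longleftrightarrow>
     a + b \<le> fibo (k+2) \<and> c + d \<le> fibo (k+2) \<and> a + c \<le> fibo (k+2) \<and> b + d \<le> fibo (k+2)
   \<and> a \<le> fibo (k+1) \<and> b \<le> fibo (k+1) \<and> c \<le> fibo (k+1) \<and> d \<le> fibo (k+1)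
   \<and> a + b + c + d \<le> fibo (k+3)
   \<and> a + b + c \<le> fibo k + fibo (k+2) \<and> b + c + d \<le> fibo k + fibo (k+2)
   \<and> a + d \<le> max 2 (lucas k)"

lemma inv_gen:
  "\<forall>c\<in>set cs. c \<in> {0,1,2} \<Longrightarrow>
   inv (length cs) (length (gen cs 0 0)) (length (gen cs 0 1)) (length (gen cs 1 0)) (length (gen cs 1 1))"
proof (induction cs)
  case Nil
  then show ?case by (simp add: inv_def numeral_eq_Suc lucas_def)
next
  case (Cons c cs)
  define k where "k = length cs"
  define a where "a = length (gen cs 0 0)"
  define b where "b = length (gen cs 0 1)"
  define cc where "cc = length (gen cs 1 0)"
  define d where "d = length (gen cs 1 1)"
  have I: "inv k a b cc d" using Cons by (simp add: k_def a_def b_def cc_def d_def)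
  have f2: "fibo (k+2) = fibo (k+1) + fibo k" by (simp add: numeral_eq_Suc)
  have f3: "fibo (k+3) = fibo (k+2) + fibo (k+1)" by (simp add: numeral_eq_Suc)
  have f4: "fibo (Suc k+3) = fibo (k+3) + fibo (k+2)" by (simp add: numeral_eq_Suc)
  have f1: "fibo (Suc k + 1) = fibo (k+2)" by (simp add: numeral_eq_Suc)
  have f2': "fibo (Suc k + 2) = fibo (k+3)" by (simp add: numeral_eq_Suc)
  have m: "fibo k \<le> fibo (k+1)" using fibo_mono1[of k] by simp
  have lk: "lucas (Suc k) = fibo k + fibo (k+2)" by (simp add: lucas_def)
  have lm: "lucas k \<le> lucas (Suc k)" by (rule lucas_mono1)
  have c: "c = 0 \<or> c = 1 \<or> c = 2" using Cons.prems by auto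
  show ?case
    using c I f2 f3 f4 f1 f2' m lk lm
    unfolding inv_def k_def[symmetric] a_def[symmetric] b_def[symmetric] cc_def[symmetric] d_def[symmetric]
    by (elim disjE) (simp_all add: a_def b_def cc_def d_def k_def, linarith+)
qed

theorem lemma3p1:
  fixes n :: nat and s :: "nat \<Rightarrow> nat"
  assumes "n \<ge> 2"
    and "\<forall>i\<in>{1..n}. s i \<in> {0, 1, 2}"
  shows "card {x :: nat list. length x = n \<and> set x \<subseteq> {0, 1}
            \<and> (\<forall>i\<in>{1..<n}. x ! (i - 1) + x ! i \<noteq> s i)
            \<and> x ! (n - 1) + x ! 0 \<noteq> s n} \<le> lucas n"
proof -
  define S where "S = map s [1..<n+1]"
  define T where "T = {x :: nat list. length x = n \<and> set x \<subseteq> {0, 1}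
            \<and> (\<forall>i\<in>{1..<n}. x ! (i - 1) + x ! i \<noteq> s i)
            \<and> x ! (n - 1) + x ! 0 \<noteq> s n}"
  have lS: "length S = n" by (simp add: S_def)
  have Si: "\<And>i. i < n \<Longrightarrow> S ! i = s (Suc i)" unfolding S_def by (simp del: upt_Suc add: nth_map_upt)
  have sub: "T \<subseteq> (\<lambda>xs. 0 # butlast xs) ` set (gen S 0 0) \<union> (\<lambda>xs. 1 # butlast xs) ` set (gen S 1 1)"
  proof
    fix x assume xT: "x \<in> T"
    then have lx: "length x = n" and sx: "set x \<subseteq> {0,1}"
      and cx: "\<forall>i\<in>{1..<n}. x ! (i - 1) + x ! i \<noteq> s i" and ex: "x ! (n - 1) + x ! 0 \<noteq> s n"
      by (auto simp: T_def)
    obtain x0 r where xr: "x = x0 # r" using lx assms(1) by (cases x) auto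
    have lr: "length r = n - 1" using lx xr by simp
    have x01: "x0 \<in> {0,1}" using sx xr by auto
    have mem: "r @ [x0] \<in> set (gen S x0 x0)"
    proof (rule gen_mem)
      show "length (r @ [x0]) = length S" using lr lS assms(1) by simp
      show "set (r @ [x0]) \<subseteq> {0,1}" using sx xr by auto
      show "last (x0 # r @ [x0]) = x0" by simp
      show "\<forall>i<length S. (x0 # r @ [x0]) ! i + (r @ [x0]) ! i \<noteq> S ! i"
      proof (intro allI impI)
        fix i assume "i < length S"
        then have i: "i < n" using lS by simp
        have e1: "(x0 # r @ [x0]) ! i = x ! i"
          using i lr xr by (simp add: nth_append Cons_nth_drop_Suc del: append_Cons)
            (metis append_Cons lx nth_append)
        show "(x0 # r @ [x0]) ! i + (r @ [x0]) ! i \<noteq> S ! i"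
        proof (cases "i < n - 1")
          case True
          have "(r @ [x0]) ! i = x ! Suc i" using True lr xr by (simp add: nth_append)
          moreover have "x ! (Suc i - 1) + x ! Suc i \<noteq> s (Suc i)"
          proof -
            have "Suc i \<in> {1..<n}" using True by simp
            then show ?thesis using cx by blast
          qed
          ultimately show ?thesis using e1 Si i by simp
        next
          case False
          then have ii: "i = n - 1" using i by simp
          have "(r @ [x0]) ! i = x ! 0" using ii lr xr by (simp add: nth_append)
          moreover have "s (Suc i) = s n" using ii assms(1) by simp
          ultimately show ?thesis using e1 Si i ex ii by simp
        qed
      qed
    qed
    have "x = x0 # butlast (r @ [x0])" using xr by simp
    then show "x \<in> (\<lambda>xs. 0 # butlast xs) ` set (gen S 0 0) \<union> (\<lambda>xs. 1 # butlast xs) ` set (gen S 1 1)"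
    proof -
      have img: "x \<in> (\<lambda>xs. x0 # butlast xs) ` set (gen S x0 x0)"
        using mem \<open>x = x0 # butlast (r @ [x0])\<close> by (rule rev_image_eqI)
      show ?thesis using x01 img by auto
    qed
  qed
  have "card T \<le> card ((\<lambda>xs. 0 # butlast xs) ` set (gen S 0 0) \<union> (\<lambda>xs. 1 # butlast xs) ` set (gen S 1 1))"
    by (rule card_mono[OF _ sub]) auto
  also have "\<dots> \<le> card ((\<lambda>xs. 0 # butlast xs) ` set (gen S 0 0)) + card ((\<lambda>xs. 1 # butlast xs) ` set (gen S 1 1))"
    by (rule card_Un_le)
  also have "\<dots> \<le> length (gen S 0 0) + length (gen S 1 1)"
    using card_image_le[of "set (gen S 0 0)" "\<lambda>xs. 0 # butlast xs"]
      card_image_le[of "set (gen S 1 1)" "\<lambda>xs. 1 # butlast xs"]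
      card_length[of "gen S 0 0"] card_length[of "gen S 1 1"] by simp
  also have "\<dots> \<le> max 2 (lucas n)"
  proof -
    have "\<forall>c\<in>set S. c \<in> {0,1,2}" using assms(2) unfolding S_def
      by (simp del: upt_Suc)
    from inv_gen[OF this] show ?thesis using lS by (simp add: inv_def)
  qed
  also have "\<dots> = lucas n"
  proof -
    have "fibo 3 \<le> fibo (n+1)" using assms(1) by (intro fibo_mono) simp
    then have "2 \<le> lucas n" by (simp add: lucas_def numeral_eq_Suc)
    then show ?thesis by simp
  qed
  finally show ?thesis unfolding T_def .
qed

end
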